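(* For any odd prime $p$ and any non-negative integer $k$, \[ C^{(-k-1)}_{p-1}\equiv 1\pmod p. \]
   Context: For any integer $k$, let $\mathrm{Li}_k(t)=\sum_{n=1}^{\infty} t^n/n^k$. The poly-Bernoulli numbers of type $C$, $C^{(k)}_n$ ($n\ge0$), are defined by $\frac{\mathrm{Li}_k(1-e^{-t})}{e^{t}-1}=\sum_{n=0}^{\infty}C^{(k)}_n\frac{t^n}{n!}$. For negative upper index these are integers. *)

theory Defs
  imports "HOL-Computational_Algebra.Formal_Power_Series" "HOL-Number_Theory.Number_Theory"
begin

text \<open>Formal power series of Li_{-m}(x) = sum_{n>=1} n^m x^n, for m a natural number
  (so the upper index of Li is the non-positive integer -m).\<close>
definition Li_neg_fps :: "nat \<Rightarrow> rat fps" where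
  "Li_neg_fps m = Abs_fps (\<lambda>n. if n = 0 then 0 else (of_nat n) ^ m)"

definition polyC_neg :: "nat \<Rightarrow> nat \<Rightarrow> rat" where
  "polyC_neg m n =
     fact n * fps_nth (fps_compose (Li_neg_fps m) (1 - fps_exp (-1)) / (fps_exp 1 - 1)) n"

end

theory Submission
  imports Defs
begin
unbundle fps_syntax

lemma Li_Suc: "Li_neg_fps (Suc m) = fps_X * fps_deriv (Li_neg_fps m)"
  by (rule fps_ext) (auto simp: Li_neg_fps_def fps_X_mult_nth)

lemma x0: "(1 - fps_exp (-1::rat)) $ 0 = 0" by simp
lemma dx: "fps_deriv (1 - fps_exp (-1::rat)) = fps_exp (-1)"
  by (simp flip: fps_const_neg)
lemma ex: "(fps_exp 1 - 1) * fps_exp (-1::rat) = 1 - fps_exp (-1)"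
proof -
  have "fps_exp (1::rat) * fps_exp (-1) = 1"
  proof -
    have "fps_exp (1::rat) * fps_exp (-1) = fps_exp (1 + -1)" by (simp only: fps_exp_add_mult)
    also have "fps_exp (1 + -1::rat) = 1" by (simp add: fps_eq_iff)
    finally show ?thesis .
  qed
  then show ?thesis by (simp add: algebra_simps)
qed

lemma main_fps:
  "fps_compose (Li_neg_fps (Suc k)) (1 - fps_exp (-1)) / (fps_exp 1 - 1)
   = fps_deriv (fps_compose (Li_neg_fps k) (1 - fps_exp (-1::rat)))"
proof -
  let ?x = "1 - fps_exp (-1::rat)"
  have "fps_compose (Li_neg_fps (Suc k)) ?x = ?x * (fps_deriv (Li_neg_fps k) oo ?x)"
    by (simp only: Li_Suc fps_compose_mult_distrib[OF x0]) (simp add: x0)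
  also have "\<dots> = (fps_deriv (fps_compose (Li_neg_fps k) ?x)) * (fps_exp 1 - 1)"
  proof -
    have g: "\<And>x a b c :: rat fps. x = a * b \<Longrightarrow> x * c = (c * b) * a" by (simp add: mult_ac)
    show ?thesis unfolding fps_compose_deriv[OF x0] dx by (rule g) (rule ex[symmetric])
  qed
  finally have e: "fps_compose (Li_neg_fps (Suc k)) ?x = fps_deriv (fps_compose (Li_neg_fps k) ?x) * (fps_exp 1 - 1)" .
  have nz: "fps_exp (1::rat) - 1 \<noteq> 0"
  proof
    assume "fps_exp (1::rat) - 1 = 0"
    then have "(fps_exp (1::rat) - 1) $ 1 = 0" by simp
    then show False by simp
  qed
  show ?thesis by (simp only: e fps_divide_times_eq[OF nz])
qed

definition T :: "nat \<Rightarrow> nat \<Rightarrow> int" where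
  "T p n = (\<Sum>i\<le>n. int (n choose i) * (-1)^i * (- int i)^p)"

lemma a1: "fps_const ((-1::rat)^i) = (-1)^i" by (simp only: fps_const_power[symmetric] fps_const_neg[symmetric] fps_const_1_eq_1)
lemma a2: "(- fps_exp (-1::rat)) ^ i = (-1)^i * fps_exp (of_nat i * -1)"
      by (subst power_minus) (simp only: fps_exp_power_mult)
lemma a3: "(of_nat (n choose i) :: rat fps) = fps_const (of_nat (n choose i))"
      by (simp add: fps_of_nat)

lemma xpow: "of_nat (fact p) * ((1 - fps_exp (-1::rat)) ^ n) $ p = of_int (T p n)"
proof -
  have "(1 - fps_exp (-1::rat)) ^ n = (- fps_exp (-1) + 1) ^ n" by simp
  also have "\<dots> = (\<Sum>i\<le>n. of_nat (n choose i) * (- fps_exp (-1::rat)) ^ i * 1 ^ (n - i))"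
    by (rule binomial_ring)
  also have "\<dots> = (\<Sum>i\<le>n. fps_const (of_nat (n choose i)) * fps_const ((-1)^i) * fps_exp (of_nat i * -1))"
    by (intro sum.cong refl) (simp only: a1 a2 a3 power_one mult_1_right mult.assoc)
  finally have "((1 - fps_exp (-1::rat)) ^ n) $ p = (\<Sum>i\<le>n. of_nat (n choose i) * (-1)^i * ((of_nat i * -1)^p / of_nat (fact p)))"
    by (simp only: fps_sum_nth fps_mult_left_const_nth fps_exp_nth mult.assoc)
  then show ?thesis
    by (simp add: T_def sum_distrib_left)
qed


lemma fermat_nat: assumes "prime (p::nat)" shows "[i ^ p = i] (mod p)"
proof (cases "p dvd i")
  case True
  have "p > 0" using assms prime_gt_0_nat by blast
  have "i dvd i ^ p" using \<open>p > 0\<close> by (simp add: dvd_power)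
  then have "p dvd i ^ p" using True dvd_trans by blast
  then show ?thesis using True by (simp add: cong_def dvd_eq_mod_eq_0)
next
  case False
  have "[i ^ (p - 1) = 1] (mod p)" by (rule fermat_theorem[OF assms False])
  then have "[i * i ^ (p - 1) = i * 1] (mod p)" by (rule cong_scalar_left)
  moreover have "i * i ^ (p - 1) = i ^ p"
    using assms prime_gt_0_nat by (metis Suc_diff_1 power_Suc)
  ultimately show ?thesis by simp
qed

lemma fermat_negint: assumes "prime (p::nat)" "odd p" shows "[(- int i) ^ p = - int i] (mod int p)"
proof -
  have "[int (i ^ p) = int i] (mod int p)" using fermat_nat[OF assms(1)] cong_int_iff by blast
  then have "[- int (i ^ p) = - int i] (mod int p)" by (simp add: cong_minus_minus_iff)
  moreover have "(- int i) ^ p = - int (i ^ p)" using assms(2) by simp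
  ultimately show ?thesis by simp
qed

lemma Tmod: assumes "prime (p::nat)" "odd p"
  shows "[T p n = (if n = 1 then 1 else 0)] (mod int p)"
proof (cases "n = 1")
  case True
  have "p > 0" using assms prime_gt_0_nat by blast
  then show ?thesis using True assms(2) by (simp add: T_def power_0_left)
next
  case False
  have "[T p n = (\<Sum>i\<le>n. int (n choose i) * (-1)^i * (- int i))] (mod int p)"
    unfolding T_def by (intro cong_sum cong_mult cong_refl fermat_negint assms)
  also have "(\<Sum>i\<le>n. int (n choose i) * (-1)^i * (- int i)) = - (\<Sum>i\<le>n. (-1)^i * of_nat i * of_nat (n choose i))"
    by (simp add: sum_negf[symmetric] mult_ac)
  also have "\<dots> = 0" using choose_alternating_linear_sum[OF False] by simp
  finally show ?thesis using False by simp
qed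

theorem theorem3p3:
  fixes p k :: nat
  assumes "prime p" and "odd p"
  shows "\<exists>c::int. polyC_neg (k + 1) (p - 1) = of_int c \<and> [c = 1] (mod int p)"
proof -
  let ?x = "1 - fps_exp (-1::rat)"
  define c where "c = (\<Sum>i=0..p. (if i = 0 then 0 else int i ^ k) * T p i)"
  have p0: "p > 0" using assms prime_gt_0_nat by blast
  have "polyC_neg (k + 1) (p - 1) = fact (p - 1) * (fps_deriv (Li_neg_fps k oo ?x)) $ (p - 1)"
    unfolding polyC_neg_def using main_fps[of k] by simp
  also have "\<dots> = fact (p - 1) * (of_nat p * (Li_neg_fps k oo ?x) $ p)"
    using p0 by (simp add: fps_deriv_nth)
  also have "\<dots> = of_nat (fact p) * (Li_neg_fps k oo ?x) $ p"
    using p0 by (simp add: fact_reduce[of p] mult_ac)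
  also have "\<dots> = (\<Sum>i=0..p. Li_neg_fps k $ i * (of_nat (fact p) * (?x ^ i) $ p))"
    by (simp add: fps_compose_nth sum_distrib_left mult_ac)
  also have "\<dots> = (\<Sum>i=0..p. of_int ((if i = 0 then 0 else int i ^ k) * T p i))"
    by (intro sum.cong refl) (simp add: xpow[simplified] Li_neg_fps_def)
  also have "\<dots> = of_int c" by (simp add: c_def)
  finally have 1: "polyC_neg (k + 1) (p - 1) = of_int c" .
  have "[c = (\<Sum>i=0..p. (if i = 0 then 0 else int i ^ k) * (if i = 1 then 1 else 0))] (mod int p)"
    unfolding c_def by (intro cong_sum cong_mult cong_refl Tmod assms)
  also have "(\<Sum>i=0..p. (if i = 0 then 0 else int i ^ k) * (if i = 1 then 1 else 0)) = (\<Sum>i=0..p. (if i = 1 then 1 else 0))"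
    by (intro sum.cong refl) auto
  also have "\<dots> = 1" using p0 by simp
  finally show ?thesis using 1 by blast
qed

end
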